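(* Consider the following model. A principal P and an agent A interact over two periods $t\in\{1,2\}$. States $\omega_t\in\{0,1\}$ satisfy $\Pr[\omega_1=1]=\mu_0\in(0,1)$ and $\Pr[\omega_2=\omega\mid\omega_1=\omega]=\rho\in(1/2,1)$. In each period A chooses $e_t\in\{0,1\}$; if $e_t=1$ he observes $\omega_t$, if $e_t=0$ he observes $\omega_t$ with probability $\pi\in(0,1)$ and nothing otherwise. A then reports $r_t\in\{\varnothing,\omega_t\}$ if he observed $\omega_t$, and $r_t=\varnothing$ otherwise. P chooses $x\in\{0,1\}$ at the end of period 2. Payoffs: P gets $\mathbb{1}[x=\omega_2]-k(e_1+e_2)$, A gets $x-c(e_1+e_2)$, $c,k>0$. A mechanism $m=(\sigma,\hat x)$ consists of $\sigma_1\in\{0,1\}$, $\sigma_2:\{\varnothing,0,1\}\to\{0,1\}$, $\hat x:\{\varnothing,0,1\}^2\to\{0,1\}$; P commits to it, and A best-responds, following the recommendation and disclosing when indifferent. A mechanism is incentive compatible (IC) if (i) at every history occurring with positive probability, A's optimal testing decision equals the recommendation (obedience); (ii) at every such history and after every observed result, A optimally reports the observed result (full disclosure); and (iii) it is forcing: for every $r_1$ with $\sigma_2(r_1)=1$ after which A would report $r_2=\varnothing$, $\hat x(r_1,\varnothing)=0$. Then for any mechanism $m$ there exists an IC mechanism $m'$ that generates the same outcomes (testing decisions, information revealed and assignments) as $m$. *)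

theory Defs
  imports Main "HOL.Real"
begin

text \<open>
States, testing decisions and assignments are encoded as bool (False = 0, True = 1).
Observations and reports are of type bool option: None = nothing / the empty report,
Some w = the state w.
Parameters: mu0 = Pr[omega1 = 1], rho = persistence, pp = pi (prob. of observing without
testing), c = agent's testing cost.
\<close>

datatype mech = Mech (sig1: bool) (sig2: "bool option \<Rightarrow> bool")
                     (xhat: "bool option \<Rightarrow> bool option \<Rightarrow> bool")

definition rep2 :: "mech \<Rightarrow> bool option \<Rightarrow> bool option \<Rightarrow> bool option" where
  "rep2 m r1 o2 = (case o2 of None \<Rightarrow> None
     | Some w \<Rightarrow> (if xhat m r1 None \<and> \<not> xhat m r1 (Some w) then None else Some w))"

definition val2 :: "mech \<Rightarrow> bool option \<Rightarrow> bool option \<Rightarrow> real" where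
  "val2 m r1 o2 = of_bool (xhat m r1 (rep2 m r1 o2))"

text \<open>Agent's belief Pr[omega2 = 1] given his period-1 observation o1
  (o1 = None only arises without testing, in which case the belief on omega1 stays mu0).\<close>
definition belief2 :: "real \<Rightarrow> real \<Rightarrow> bool option \<Rightarrow> real" where
  "belief2 rho mu0 o1 =
     (let mu = (case o1 of None \<Rightarrow> mu0 | Some w \<Rightarrow> of_bool w) in rho * mu + (1 - rho) * (1 - mu))"

text \<open>Agent's expected period-2 utility (gross of period-1 cost) from testing decision e,
  given report r1 and belief q on omega2.\<close>
definition util2 :: "real \<Rightarrow> real \<Rightarrow> mech \<Rightarrow> bool option \<Rightarrow> real \<Rightarrow> bool \<Rightarrow> real" where
  "util2 pp c m r1 q e =
     (if e then q * val2 m r1 (Some True) + (1 - q) * val2 m r1 (Some False) - c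
      else pp * (q * val2 m r1 (Some True) + (1 - q) * val2 m r1 (Some False))
           + (1 - pp) * val2 m r1 None)"

definition choice2 :: "real \<Rightarrow> real \<Rightarrow> mech \<Rightarrow> bool option \<Rightarrow> real \<Rightarrow> bool" where
  "choice2 pp c m r1 q =
     (if util2 pp c m r1 q (\<not> sig2 m r1) > util2 pp c m r1 q (sig2 m r1)
      then \<not> sig2 m r1 else sig2 m r1)"

definition cont2 :: "real \<Rightarrow> real \<Rightarrow> mech \<Rightarrow> bool option \<Rightarrow> real \<Rightarrow> real" where
  "cont2 pp c m r1 q = max (util2 pp c m r1 q True) (util2 pp c m r1 q False)"

definition rep1 :: "real \<Rightarrow> real \<Rightarrow> real \<Rightarrow> real \<Rightarrow> mech \<Rightarrow> bool option \<Rightarrow> bool option" where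
  "rep1 mu0 rho pp c m o1 = (case o1 of None \<Rightarrow> None
     | Some w \<Rightarrow> (if cont2 pp c m None (belief2 rho mu0 (Some w))
                      > cont2 pp c m (Some w) (belief2 rho mu0 (Some w))
                   then None else Some w))"

definition val1 :: "real \<Rightarrow> real \<Rightarrow> real \<Rightarrow> real \<Rightarrow> mech \<Rightarrow> bool option \<Rightarrow> real" where
  "val1 mu0 rho pp c m o1 = cont2 pp c m (rep1 mu0 rho pp c m o1) (belief2 rho mu0 o1)"

definition util1 :: "real \<Rightarrow> real \<Rightarrow> real \<Rightarrow> real \<Rightarrow> mech \<Rightarrow> bool \<Rightarrow> real" where
  "util1 mu0 rho pp c m e =
     (if e then mu0 * val1 mu0 rho pp c m (Some True) + (1 - mu0) * val1 mu0 rho pp c m (Some False) - c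
      else pp * (mu0 * val1 mu0 rho pp c m (Some True) + (1 - mu0) * val1 mu0 rho pp c m (Some False))
           + (1 - pp) * val1 mu0 rho pp c m None)"

definition choice1 :: "real \<Rightarrow> real \<Rightarrow> real \<Rightarrow> real \<Rightarrow> mech \<Rightarrow> bool" where
  "choice1 mu0 rho pp c m =
     (if util1 mu0 rho pp c m (\<not> sig1 m) > util1 mu0 rho pp c m (sig1 m)
      then \<not> sig1 m else sig1 m)"

text \<open>A period-2 history with private observation o1 occurs with positive probability
  iff o1 is a possible observation under the agent's period-1 test choice.\<close>
definition hist_possible :: "real \<Rightarrow> real \<Rightarrow> real \<Rightarrow> real \<Rightarrow> mech \<Rightarrow> bool option \<Rightarrow> bool" where
  "hist_possible mu0 rho pp c m o1 = (o1 = None \<longrightarrow> \<not> choice1 mu0 rho pp c m)"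

definition IC :: "real \<Rightarrow> real \<Rightarrow> real \<Rightarrow> real \<Rightarrow> mech \<Rightarrow> bool" where
  "IC mu0 rho pp c m \<longleftrightarrow>
     \<comment> \<open>(i) obedience\<close>
     choice1 mu0 rho pp c m = sig1 m \<and>
     (\<forall>o1. hist_possible mu0 rho pp c m o1 \<longrightarrow>
        choice2 pp c m (rep1 mu0 rho pp c m o1) (belief2 rho mu0 o1)
          = sig2 m (rep1 mu0 rho pp c m o1)) \<and>
     \<comment> \<open>(ii) full disclosure\<close>
     (\<forall>w. rep1 mu0 rho pp c m (Some w) = Some w) \<and>
     (\<forall>o1 w. hist_possible mu0 rho pp c m o1 \<longrightarrow>
        rep2 m (rep1 mu0 rho pp c m o1) (Some w) = Some w) \<and>
     \<comment> \<open>(iii) forcing\<close>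
     (\<forall>r1. sig2 m r1 \<longrightarrow> \<not> xhat m r1 None)"

text \<open>Realized path given states w1 w2 and the exogenous luck l1 l2 (observing without testing):
  (omega1, omega2, e1, o1, e2, o2, x).\<close>
definition path :: "real \<Rightarrow> real \<Rightarrow> real \<Rightarrow> real \<Rightarrow> mech \<Rightarrow> bool \<Rightarrow> bool \<Rightarrow> bool \<Rightarrow> bool
    \<Rightarrow> bool \<times> bool \<times> bool \<times> bool option \<times> bool \<times> bool option \<times> bool" where
  "path mu0 rho pp c m w1 w2 l1 l2 =
    (let e1 = choice1 mu0 rho pp c m;
         o1 = (if e1 \<or> l1 then Some w1 else None);
         r1 = rep1 mu0 rho pp c m o1;
         e2 = choice2 pp c m r1 (belief2 rho mu0 o1);
         o2 = (if e2 \<or> l2 then Some w2 else None);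
         r2 = rep2 m r1 o2
     in (w1, w2, e1, o1, e2, o2, xhat m r1 r2))"

definition weight :: "real \<Rightarrow> real \<Rightarrow> real \<Rightarrow> bool \<Rightarrow> bool \<Rightarrow> bool \<Rightarrow> bool \<Rightarrow> real" where
  "weight mu0 rho pp w1 w2 l1 l2 =
     (if w1 then mu0 else 1 - mu0) * (if w2 = w1 then rho else 1 - rho)
     * (if l1 then pp else 1 - pp) * (if l2 then pp else 1 - pp)"

definition outcome_dist :: "real \<Rightarrow> real \<Rightarrow> real \<Rightarrow> real \<Rightarrow> mech
    \<Rightarrow> bool \<times> bool \<times> bool \<times> bool option \<times> bool \<times> bool option \<times> bool \<Rightarrow> real" where
  "outcome_dist mu0 rho pp c m t =
     (\<Sum>(w1, w2, l1, l2) \<in> (UNIV :: (bool \<times> bool \<times> bool \<times> bool) set).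
        (if path mu0 rho pp c m w1 w2 l1 l2 = t then weight mu0 rho pp w1 w2 l1 l2 else 0))"

end

theory Submission
  imports Defs
begin

lemma conv_mono:
  fixes q a b a' b' :: real
  assumes "0 \<le> q" "q \<le> 1" "a \<le> a'" "b \<le> b'"
  shows "q * a + (1 - q) * b \<le> q * a' + (1 - q) * b'"
proof -
  have "q * a \<le> q * a'" using assms by (simp add: mult_left_mono)
  moreover have "(1 - q) * b \<le> (1 - q) * b'" using assms by (simp add: mult_left_mono)
  ultimately show ?thesis by linarith
qed

lemma belief_bounds:
  assumes "0 < mu0" "mu0 < 1" "0 < rho" "rho < 1"
  shows "0 \<le> belief2 rho mu0 o1 \<and> belief2 rho mu0 o1 \<le> 1"
proof -
  obtain mu where mu: "belief2 rho mu0 o1 = rho * mu + (1 - rho) * (1 - mu)" "0 \<le> mu" "mu \<le> 1"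
    using assms by (cases o1) (auto simp: belief2_def Let_def)
  have "0 \<le> rho * mu" "0 \<le> (1 - rho) * (1 - mu)" using mu assms by auto
  moreover have "rho * mu + (1 - rho) * (1 - mu) \<le> rho * 1 + (1 - rho) * 1"
    using conv_mono[of rho mu 1 "1 - mu" 1] mu assms by auto
  ultimately show ?thesis using mu by auto
qed

lemma util2_mono:
  assumes "0 \<le> q" "q \<le> 1" "0 < pp" "pp < 1"
    and "\<And>ob. val2 m1 r1 ob \<le> val2 m2 r2 ob"
  shows "util2 pp c m1 r1 q e \<le> util2 pp c m2 r2 q e"
proof -
  have h: "q * val2 m1 r1 (Some True) + (1 - q) * val2 m1 r1 (Some False)
      \<le> q * val2 m2 r2 (Some True) + (1 - q) * val2 m2 r2 (Some False)"
    using conv_mono assms by blast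
  have "pp * (q * val2 m1 r1 (Some True) + (1 - q) * val2 m1 r1 (Some False)) + (1 - pp) * val2 m1 r1 None
      \<le> pp * (q * val2 m2 r2 (Some True) + (1 - q) * val2 m2 r2 (Some False)) + (1 - pp) * val2 m2 r2 None"
    using conv_mono[OF _ _ h assms(5)[of None], of pp] assms by auto
  then show ?thesis using h unfolding util2_def by auto
qed

theorem proposition3:
  fixes mu0 rho pp c k :: real and m :: mech
  assumes "0 < mu0" "mu0 < 1" "1/2 < rho" "rho < 1" "0 < pp" "pp < 1" "0 < c" "0 < k"
  shows "\<exists>m'. IC mu0 rho pp c m' \<and> outcome_dist mu0 rho pp c m' = outcome_dist mu0 rho pp c m"
proof -
  define R where "R o1 = rep1 mu0 rho pp c m o1" for o1
  define B where "B o1 = belief2 rho mu0 o1" for o1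
  define E2 where "E2 o1 = choice2 pp c m (R o1) (B o1)" for o1
  define X where "X o1 o2 = xhat m (R o1) (rep2 m (R o1) o2)" for o1 o2
  define m' where "m' = Mech (choice1 mu0 rho pp c m) E2 (\<lambda>o1 o2. X o1 o2 \<and> (o2 = None \<longrightarrow> \<not> E2 o1))"
  have Bb: "0 \<le> B o1" "B o1 \<le> 1" for o1
    using belief_bounds[of mu0 rho o1] assms unfolding B_def by auto
  have rep2m': "rep2 m' o1 (Some w) = Some w" for o1 w
    by (auto simp: rep2_def m'_def X_def)
  have vle: "val2 m' o1 ob \<le> val2 m (R o1) ob" for o1 ob
    by (cases ob) (auto simp: val2_def rep2_def m'_def X_def)
  have veqS: "E2 o1 \<Longrightarrow> val2 m' o1 (Some w) = val2 m (R o1) (Some w)" for o1 w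
    by (auto simp: val2_def rep2_def m'_def X_def)
  have veq: "\<not> E2 o1 \<Longrightarrow> val2 m' o1 ob = val2 m (R o1) ob" for o1 ob
    by (cases ob) (auto simp: val2_def rep2_def m'_def X_def)
  have ule: "util2 pp c m' o1 q e \<le> util2 pp c m (R o1) q e" if "0 \<le> q" "q \<le> 1" for o1 q e
    using util2_mono[OF that assms(5,6) vle] .
  have uleB: "util2 pp c m' o1 (B o1) e \<le> util2 pp c m (R o1) (B o1) e" for o1 e
    using ule Bb by blast
  have ueq: "util2 pp c m' o1 q (E2 o1) = util2 pp c m (R o1) q (E2 o1)" for o1 q
  proof (cases "E2 o1")
    case True then show ?thesis using veqS[OF True] by (simp add: util2_def)
  next
    case False then show ?thesis using veq[OF False] by (simp add: util2_def)
  qed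
  have opt: "util2 pp c m (R o1) (B o1) (\<not> E2 o1) \<le> util2 pp c m (R o1) (B o1) (E2 o1)" for o1
    unfolding E2_def choice2_def by (auto split: if_splits)
  have sig2m': "sig2 m' = E2" by (simp add: m'_def)
  have ch2: "choice2 pp c m' o1 (B o1) = E2 o1" for o1
  proof -
    have "util2 pp c m' o1 (B o1) (\<not> E2 o1) \<le> util2 pp c m' o1 (B o1) (E2 o1)"
      using uleB[of o1 "\<not> E2 o1"] opt[of o1] ueq[of o1 "B o1"] by linarith
    then show ?thesis unfolding choice2_def sig2m' by auto
  qed
  have maxeq: "max a b = a" if "b \<le> a" for a b :: real using that by auto
  have cont_eq: "cont2 pp c m' o1 (B o1) = cont2 pp c m (R o1) (B o1)" for o1
  proof -
    have "cont2 pp c m' o1 (B o1) = util2 pp c m' o1 (B o1) (E2 o1)"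
      using uleB[of o1 "\<not> E2 o1"] opt[of o1] ueq[of o1 "B o1"]
      unfolding cont2_def by (cases "E2 o1") (auto simp: max_def)
    moreover have "cont2 pp c m (R o1) (B o1) = util2 pp c m (R o1) (B o1) (E2 o1)"
      using opt[of o1] unfolding cont2_def by (cases "E2 o1") (auto simp: max_def)
    ultimately show ?thesis using ueq by simp
  qed
  have cont_le: "cont2 pp c m' o1 q \<le> cont2 pp c m (R o1) q" if "0 \<le> q" "q \<le> 1" for o1 q
    using ule[OF that, of o1 True] ule[OF that, of o1 False] unfolding cont2_def by auto
  have RNone: "R None = None" by (simp add: R_def rep1_def)
  have mR: "cont2 pp c m None (B (Some w)) \<le> cont2 pp c m (R (Some w)) (B (Some w))" for w
    unfolding R_def rep1_def B_def by (auto split: if_splits)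
  have rep1m': "rep1 mu0 rho pp c m' (Some w) = Some w" for w
  proof -
    have "cont2 pp c m' None (B (Some w)) \<le> cont2 pp c m' (Some w) (B (Some w))"
      using cont_le[OF Bb(1) Bb(2), of None "Some w"] RNone mR[of w] cont_eq[of "Some w"] by simp
    then show ?thesis unfolding rep1_def B_def by auto
  qed
  have rep1m'_all: "rep1 mu0 rho pp c m' o1 = o1" for o1
    using rep1m' by (cases o1) (auto simp: rep1_def)
  have val1eq: "val1 mu0 rho pp c m' o1 = val1 mu0 rho pp c m o1" for o1
    unfolding val1_def rep1m'_all using cont_eq[of o1] unfolding R_def B_def by simp
  have util1eq: "util1 mu0 rho pp c m' e = util1 mu0 rho pp c m e" for e
    unfolding util1_def val1eq ..
  have ch1: "choice1 mu0 rho pp c m' = choice1 mu0 rho pp c m"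
  proof -
    have "util1 mu0 rho pp c m (\<not> choice1 mu0 rho pp c m) \<le> util1 mu0 rho pp c m (choice1 mu0 rho pp c m)"
      unfolding choice1_def by (auto split: if_splits)
    then show ?thesis unfolding choice1_def[of _ _ _ _ m'] util1eq by (auto simp: m'_def)
  qed
  have IC: "IC mu0 rho pp c m'"
    unfolding IC_def rep1m'_all
    using ch1 ch2 rep2m' unfolding B_def
    by (auto simp: m'_def)
  have path_eq: "path mu0 rho pp c m' w1 w2 l1 l2 = path mu0 rho pp c m w1 w2 l1 l2" for w1 w2 l1 l2
  proof -
    have e2: "choice2 pp c m' o1 (belief2 rho mu0 o1) = E2 o1" for o1
      using ch2 unfolding B_def .
    have xeq: "xhat m' o1 (rep2 m' o1 (if E2 o1 \<or> l2 then Some w2 else None))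
        = xhat m (R o1) (rep2 m (R o1) (if E2 o1 \<or> l2 then Some w2 else None))" for o1
    proof (cases "E2 o1 \<or> l2")
      case True
      have "xhat m' o1 (Some w2) = X o1 (Some w2)" by (simp add: m'_def)
      then show ?thesis using True rep2m'[of o1 w2] by (simp add: X_def)
    next
      case False then show ?thesis by (simp add: rep2_def m'_def X_def)
    qed
    show ?thesis
      unfolding path_def Let_def ch1 rep1m'_all e2 using xeq
      by (simp add: E2_def R_def B_def)
  qed
  have "outcome_dist mu0 rho pp c m' = outcome_dist mu0 rho pp c m"
    unfolding outcome_dist_def path_eq ..
  with IC show ?thesis by blast
qed

end
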